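(* Let $\Omega\subset\mathbb{R}^d$ be compact, $\mu$ a probability measure on $\Omega$, $X_N$ an $N$-dimensional subspace of real-valued continuous functions on $\Omega$ (also $N$-dimensional in $L_2(\Omega,\mu)$), and $M$ a nonnegative integer. Then for every real continuous function $\mathcal K$ on $\Omega\times\Omega$, $$\sigma_M^c(\mathcal K)_{(\infty,1)}=\sigma_M^\perp(\mathcal K)_{(\infty,1)}.$$
   Context: $\|\cdot\|_1$ is the norm of $L_1(\Omega,\mu)$. Let $\mathcal{B}_M(X_N^\perp)$ be the set of all functions $\mathcal{W}(\mathbf x,\mathbf y)=\sum_{i=1}^M w_i(\mathbf x)v_i(\mathbf y)$ with $w_i\in\mathcal C(\Omega)$ and $v_i\in L_1(\Omega,\mu)$ such that for every $f\in X_N$ and every $\mathbf x\in\Omega$, $\int_\Omega\mathcal W(\mathbf x,\mathbf y)f(\mathbf y)\,d\mu(\mathbf y)=0$. Define $$\sigma_M^c(\mathcal K)_{(\infty,1)}:=\inf_{\mathcal W\in\mathcal B_M(X_N^\perp)}\sup_{\mathbf x\in\Omega}\|\mathcal K(\mathbf x,\cdot)-\mathcal W(\mathbf x,\cdot)\|_1,$$ $$\sigma_M^\perp(\mathcal K)_{(\infty,1)}:=\inf\ \sup_{\mathbf x\in\Omega}\Big\|\mathcal K(\mathbf x,\cdot)-\sum_{i=1}^M w_i(\mathbf x)v_i(\cdot)\Big\|_1,$$ where the last infimum is over all $w_1,\dots,w_M\in\mathcal C(\Omega)$ and all $v_1,\dots,v_M\in L_1(\Omega,\mu)\cap X_N^\perp$,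 i.e. $\int_\Omega v_if\,d\mu=0$ for all $f\in X_N$. *)

theory Defs
  imports "HOL-Analysis.Analysis" "HOL-Probability.Probability"
begin

definition span_fun :: "nat \<Rightarrow> (nat \<Rightarrow> 'a \<Rightarrow> real) \<Rightarrow> ('a \<Rightarrow> real) set" where
  "span_fun N b = {f. \<exists>c :: nat \<Rightarrow> real. f = (\<lambda>y. \<Sum>i<N. c i * b i y)}"

definition err_inf1 ::
  "'a set \<Rightarrow> 'a measure \<Rightarrow> nat \<Rightarrow> ('a \<times> 'a \<Rightarrow> real)
     \<Rightarrow> (nat \<Rightarrow> 'a \<Rightarrow> real) \<Rightarrow> (nat \<Rightarrow> 'a \<Rightarrow> real) \<Rightarrow> real" where
  "err_inf1 \<Omega> \<mu> M K w v =
     (SUP x\<in>\<Omega>. (LINT y|\<mu>. \<bar>K (x, y) - (\<Sum>i<M. w i x * v i y)\<bar>))"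

definition sigma_c ::
  "'a::topological_space set \<Rightarrow> 'a measure \<Rightarrow> ('a \<Rightarrow> real) set \<Rightarrow> nat \<Rightarrow> ('a \<times> 'a \<Rightarrow> real) \<Rightarrow> real" where
  "sigma_c \<Omega> \<mu> X M K = Inf {err_inf1 \<Omega> \<mu> M K w v | w v.
      (\<forall>i<M. continuous_on \<Omega> (w i) \<and> integrable \<mu> (v i)) \<and>
      (\<forall>f\<in>X. \<forall>x\<in>\<Omega>. (LINT y|\<mu>. (\<Sum>i<M. w i x * v i y) * f y) = 0)}"

definition sigma_perp ::
  "'a::topological_space set \<Rightarrow> 'a measure \<Rightarrow> ('a \<Rightarrow> real) set \<Rightarrow> nat \<Rightarrow> ('a \<times> 'a \<Rightarrow> real) \<Rightarrow> real" where
  "sigma_perp \<Omega> \<mu> X M K = Inf {err_inf1 \<Omega> \<mu> M K w v | w v.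
      (\<forall>i<M. continuous_on \<Omega> (w i) \<and> integrable \<mu> (v i) \<and>
         (\<forall>f\<in>X. (LINT y|\<mu>. v i y * f y) = 0))}"

end

theory Submission
  imports Defs "Jordan_Normal_Form.Determinant"
begin

lemma gram_inverse:
  fixes G :: "nat \<Rightarrow> nat \<Rightarrow> real"
  assumes inj: "\<forall>d. (\<forall>k<N. (\<Sum>j<N. G k j * d j) = 0) \<longrightarrow> (\<forall>j<N. d j = 0)"
  shows "\<exists>B. \<forall>j<N. \<forall>k<N. (\<Sum>l<N. G j l * B l k) = (if j = k then 1 else 0)"
proof -
  define A where "A = mat N N (\<lambda>(i,j). G i j)"
  have A: "A \<in> carrier_mat N N" unfolding A_def by simp
  have "Determinant.det A \<noteq> 0"
  proof
    assume "Determinant.det A = 0"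
    then obtain v where v: "v \<in> carrier_vec N" "v \<noteq> 0\<^sub>v N" "A *\<^sub>v v = 0\<^sub>v N"
      using det_0_iff_vec_prod_zero_field[OF A] by auto
    have "\<forall>k<N. (\<Sum>j<N. G k j * v $ j) = 0"
    proof (intro allI impI)
      fix k assume k: "k < N"
      have "(A *\<^sub>v v) $ k = 0" using v(3) k by simp
      thus "(\<Sum>j<N. G k j * v $ j) = 0"
        using k v(1) by (simp add: A_def mult_mat_vec_def scalar_prod_def atLeast0LessThan)
    qed
    with inj have "\<forall>j<N. v $ j = 0" by blast
    hence "v = 0\<^sub>v N" using v(1) by (intro eq_vecI) auto
    with v(2) show False by simp
  qed
  from det_non_zero_imp_unit[OF A this, of "()"]
  obtain B' where B': "B' \<in> carrier_mat N N" "A * B' = 1\<^sub>m N"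
    unfolding Units_def ring_mat_def by auto
  show ?thesis
  proof (intro exI allI impI)
    fix j k assume jk: "j < N" "k < N"
    have "(A * B') $$ (j,k) = (1\<^sub>m N) $$ (j,k)" using B' by simp
    thus "(\<Sum>l<N. G j l * (\<lambda>l k. B' $$ (l,k)) l k) = (if j = k then 1 else 0)"
      using jk B'(1) by (simp add: A_def scalar_prod_def atLeast0LessThan)
  qed
qed

theorem proposition3p1:
  fixes \<Omega> :: "'a::euclidean_space set"
    and \<mu> :: "'a measure"
    and N M :: nat
    and b :: "nat \<Rightarrow> 'a \<Rightarrow> real"
    and K :: "'a \<times> 'a \<Rightarrow> real"
  assumes "compact \<Omega>"
    and "prob_space \<mu>"
    and "space \<mu> = \<Omega>"
    and "sets \<mu> = sets (restrict_space borel \<Omega>)"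
    and "\<forall>i<N. continuous_on \<Omega> (b i)"
    and "\<forall>c :: nat \<Rightarrow> real. (AE y in \<mu>. (\<Sum>i<N. c i * b i y) = 0) \<longrightarrow> (\<forall>i<N. c i = 0)"
    and "continuous_on (\<Omega> \<times> \<Omega>) K"
  shows "sigma_c \<Omega> \<mu> (span_fun N b) M K = sigma_perp \<Omega> \<mu> (span_fun N b) M K"
proof -
  interpret P: prob_space \<mu> by (rule assms(2))
  define bnd where "bnd g \<longleftrightarrow> g \<in> borel_measurable \<mu> \<and> (\<exists>C. \<forall>y\<in>space \<mu>. \<bar>g y\<bar> \<le> C)"
    for g :: "'a \<Rightarrow> real"
  have bnd_int: "integrable \<mu> g" if hg: "bnd g" for g
  proof -
    obtain C where C: "\<forall>y\<in>space \<mu>. \<bar>g y\<bar> \<le> C" and m: "g \<in> borel_measurable \<mu>"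
      using hg unfolding bnd_def by blast
    show ?thesis
      by (rule P.integrable_const_bound[of _ C]) (use C m in \<open>auto intro!: AE_I2\<close>)
  qed
  have mult_int: "integrable \<mu> (\<lambda>y. v y * g y)" if hv: "integrable \<mu> v" and hg: "bnd g" for v g
  proof -
    obtain C where C: "\<forall>y\<in>space \<mu>. \<bar>g y\<bar> \<le> C" and m: "g \<in> borel_measurable \<mu>"
      using hg unfolding bnd_def by blast
    show ?thesis
    proof (rule Bochner_Integration.integrable_bound[of \<mu> "\<lambda>y. \<bar>C\<bar> * v y"])
      show "integrable \<mu> (\<lambda>y. \<bar>C\<bar> * v y)" using hv by simp
      show "(\<lambda>y. v y * g y) \<in> borel_measurable \<mu>"
        using m borel_measurable_integrable[OF hv] by measurable
      show "AE x in \<mu>. norm (v x * g x) \<le> norm (\<bar>C\<bar> * v x)"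
      proof (rule AE_I2)
        fix x assume "x \<in> space \<mu>"
        hence "\<bar>g x\<bar> \<le> \<bar>C\<bar>" using C by force
        hence "\<bar>v x\<bar> * \<bar>g x\<bar> \<le> \<bar>v x\<bar> * \<bar>C\<bar>" by (rule mult_left_mono) simp
        thus "norm (v x * g x) \<le> norm (\<bar>C\<bar> * v x)" by (simp add: abs_mult mult.commute)
      qed
    qed
  qed
  have int_lin: "(LINT y|\<mu>. (\<Sum>i\<in>I. e i * v i y) * g y) = (\<Sum>i\<in>I. e i * (LINT y|\<mu>. v i y * g y))"
    if "finite I" "\<forall>i\<in>I. integrable \<mu> (v i)" "bnd g" for I e v g
  proof -
    have "(LINT y|\<mu>. (\<Sum>i\<in>I. e i * v i y) * g y) = (LINT y|\<mu>. (\<Sum>i\<in>I. e i * (v i y * g y)))"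
      by (simp add: sum_distrib_right mult.assoc)
    also have "\<dots> = (\<Sum>i\<in>I. (LINT y|\<mu>. e i * (v i y * g y)))"
      by (rule Bochner_Integration.integral_sum) (use that mult_int in auto)
    also have "\<dots> = (\<Sum>i\<in>I. e i * (LINT y|\<mu>. v i y * g y))" by simp
    finally show ?thesis .
  qed
  have bk: "bnd (b k)" if "k < N" for k
  proof -
    have c: "continuous_on \<Omega> (b k)" using assms(5) that by blast
    have "b k \<in> borel_measurable (restrict_space borel \<Omega>)"
      by (rule borel_measurable_continuous_on_restrict[OF c])
    hence m: "b k \<in> borel_measurable \<mu>"
      using measurable_cong_sets[OF assms(4), of borel borel] by metis
    have "bounded (b k ` \<Omega>)" by (rule compact_imp_bounded[OF compact_continuous_image[OF c assms(1)]])
    then obtain C where "\<forall>z\<in>b k ` \<Omega>. norm z \<le> C" unfolding bounded_iff by blast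
    hence "\<forall>y\<in>space \<mu>. \<bar>b k y\<bar> \<le> C" using assms(3) by auto
    with m show ?thesis unfolding bnd_def by blast
  qed
  obtain Cf where Cf: "\<forall>k<N. \<forall>y\<in>space \<mu>. \<bar>b k y\<bar> \<le> Cf k"
  proof -
    have "\<forall>k\<in>{..<N}. \<exists>C. \<forall>y\<in>space \<mu>. \<bar>b k y\<bar> \<le> C" using bk unfolding bnd_def by blast
    then obtain Cf where "\<forall>k\<in>{..<N}. \<forall>y\<in>space \<mu>. \<bar>b k y\<bar> \<le> Cf k" by metis
    thus ?thesis using that by blast
  qed
  have spanb: "bnd f" if hf: "f \<in> span_fun N b" for f
  proof -
    obtain c where f: "f = (\<lambda>y. \<Sum>i<N. c i * b i y)" using hf unfolding span_fun_def by blast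
    have m: "f \<in> borel_measurable \<mu>" unfolding f
      using bk unfolding bnd_def by (intro borel_measurable_sum borel_measurable_times) auto
    have "\<bar>f y\<bar> \<le> (\<Sum>i<N. \<bar>c i\<bar> * Cf i)" if y: "y \<in> space \<mu>" for y
    proof -
      have "\<bar>f y\<bar> \<le> (\<Sum>i<N. \<bar>c i * b i y\<bar>)" unfolding f by (rule sum_abs)
      also have "\<dots> \<le> (\<Sum>i<N. \<bar>c i\<bar> * Cf i)"
        using Cf y by (intro sum_mono) (auto simp: abs_mult intro: mult_left_mono)
      finally show ?thesis .
    qed
    with m show ?thesis unfolding bnd_def by blast
  qed
  have bspan: "b k \<in> span_fun N b" if "k < N" for k
  proof -
    have "(\<Sum>i<N. (if i = k then 1 else 0) * b i y) = (\<Sum>i<N. if i = k then b k y else 0)" for y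
      by (rule sum.cong) auto
    hence "b k = (\<lambda>y. \<Sum>i<N. (if i = k then 1 else 0) * b i y)"
      using that by (simp add: sum.delta)
    thus ?thesis unfolding span_fun_def mem_Collect_eq by (rule exI[of _ "\<lambda>i. if i = k then 1 else 0"])
  qed

  define r where "r k v = (LINT y|\<mu>. v y * b k y)" for k v
  define G where "G k j = (LINT y|\<mu>. b j y * b k y)" for k j
  have bint: "integrable \<mu> (b k)" if "k < N" for k using bnd_int bk that by blast
  have inj: "\<forall>d. (\<forall>k<N. (\<Sum>j<N. G k j * d j) = 0) \<longrightarrow> (\<forall>j<N. d j = 0)"
  proof (rule allI, rule impI)
    fix d :: "nat \<Rightarrow> real" assume hd: "\<forall>k<N. (\<Sum>j<N. G k j * d j) = 0"
    define h where "h y = (\<Sum>j<N. d j * b j y)" for y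
    have hspan: "h \<in> span_fun N b" unfolding span_fun_def h_def by blast
    have hb: "bnd h" by (rule spanb[OF hspan])
    have hint: "integrable \<mu> h" by (rule bnd_int[OF hb])
    have "(LINT y|\<mu>. h y * h y) = (LINT y|\<mu>. (\<Sum>k<N. d k * b k y) * h y)"
      unfolding h_def by simp
    also have "\<dots> = (\<Sum>k<N. d k * (LINT y|\<mu>. b k y * h y))"
      by (rule int_lin) (use bint hb in auto)
    also have "\<dots> = (\<Sum>k<N. d k * (\<Sum>j<N. G k j * d j))"
    proof (rule sum.cong[OF refl])
      fix k assume "k \<in> {..<N}"
      hence k: "k < N" by simp
      have "(LINT y|\<mu>. b k y * h y) = (LINT y|\<mu>. h y * b k y)" by (simp add: mult.commute)
      also have "\<dots> = (\<Sum>j<N. d j * (LINT y|\<mu>. b j y * b k y))"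
        unfolding h_def by (rule int_lin) (use bint bk k in auto)
      also have "\<dots> = (\<Sum>j<N. G k j * d j)" by (simp add: G_def mult.commute)
      finally show "d k * (LINT y|\<mu>. b k y * h y) = d k * (\<Sum>j<N. G k j * d j)" by simp
    qed
    also have "\<dots> = 0" using hd by simp
    finally have i0: "(LINT y|\<mu>. h y * h y) = 0" .
    have "AE y in \<mu>. h y * h y = 0"
      using integral_nonneg_eq_0_iff_AE[of \<mu> "\<lambda>y. h y * h y"] mult_int[OF hint hb] i0 by simp
    hence "AE y in \<mu>. (\<Sum>j<N. d j * b j y) = 0" by eventually_elim (simp add: h_def)
    thus "\<forall>j<N. d j = 0" using assms(6) by blast
  qed
  obtain Bm where Bm: "\<forall>j<N. \<forall>k<N. (\<Sum>l<N. G j l * Bm l k) = (if j = k then 1 else 0)"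
    using gram_inverse[OF inj] by blast
  define Sc where "Sc = {err_inf1 \<Omega> \<mu> M K w v | w v.
      (\<forall>i<M. continuous_on \<Omega> (w i) \<and> integrable \<mu> (v i)) \<and>
      (\<forall>f\<in>span_fun N b. \<forall>x\<in>\<Omega>. (LINT y|\<mu>. (\<Sum>i<M. w i x * v i y) * f y) = 0)}"
  define Sp where "Sp = {err_inf1 \<Omega> \<mu> M K w v | w v.
      (\<forall>i<M. continuous_on \<Omega> (w i) \<and> integrable \<mu> (v i) \<and>
         (\<forall>f\<in>span_fun N b. (LINT y|\<mu>. v i y * f y) = 0))}"
  have "Sp \<subseteq> Sc"
  proof
    fix z assume "z \<in> Sp"
    then obtain w v where z: "z = err_inf1 \<Omega> \<mu> M K w v" and
      h: "\<forall>i<M. continuous_on \<Omega> (w i) \<and> integrable \<mu> (v i) \<and>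
         (\<forall>f\<in>span_fun N b. (LINT y|\<mu>. v i y * f y) = 0)"
      unfolding Sp_def by blast
    have "(LINT y|\<mu>. (\<Sum>i<M. w i x * v i y) * f y) = 0" if f: "f \<in> span_fun N b" for f x
    proof -
      have "(LINT y|\<mu>. (\<Sum>i<M. w i x * v i y) * f y) = (\<Sum>i<M. w i x * (LINT y|\<mu>. v i y * f y))"
        by (rule int_lin) (use h spanb[OF f] in auto)
      also have "\<dots> = 0" using h f by simp
      finally show ?thesis .
    qed
    hence "\<forall>f\<in>span_fun N b. \<forall>x\<in>\<Omega>. (LINT y|\<mu>. (\<Sum>i<M. w i x * v i y) * f y) = 0" by blast
    with h show "z \<in> Sc" unfolding Sc_def z mem_Collect_eq
      by (intro exI[of _ w] exI[of _ v] conjI) auto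
  qed
  moreover have "Sc \<subseteq> Sp"
  proof
    fix z assume "z \<in> Sc"
    then obtain w v where z: "z = err_inf1 \<Omega> \<mu> M K w v" and
      h1: "\<forall>i<M. continuous_on \<Omega> (w i) \<and> integrable \<mu> (v i)" and
      h2: "\<forall>f\<in>span_fun N b. \<forall>x\<in>\<Omega>. (LINT y|\<mu>. (\<Sum>i<M. w i x * v i y) * f y) = 0"
      unfolding Sc_def by blast
    define a where "a i j = (\<Sum>l<N. Bm j l * r l (v i))" for i j
    define v' where "v' i y = v i y - (\<Sum>j<N. a i j * b j y)" for i y
    have sint: "integrable \<mu> (\<lambda>y. \<Sum>j<N. a i j * b j y)" for i
      by (intro Bochner_Integration.integrable_sum integrable_mult_right) (simp add: bint)
    have v'int: "integrable \<mu> (v' i)" if "i < M" for i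
      unfolding v'_def[abs_def] using h1 that sint by (intro Bochner_Integration.integrable_diff) auto
    have orth_b: "(LINT y|\<mu>. v' i y * b k y) = 0" if i: "i < M" and k: "k < N" for i k
    proof -
      have "(LINT y|\<mu>. v' i y * b k y) =
          (LINT y|\<mu>. v i y * b k y) - (LINT y|\<mu>. (\<Sum>j<N. a i j * b j y) * b k y)"
        unfolding v'_def left_diff_distrib
        by (rule Bochner_Integration.integral_diff) (use mult_int h1 i bk k sint in auto)
      also have "(LINT y|\<mu>. (\<Sum>j<N. a i j * b j y) * b k y) = (\<Sum>j<N. a i j * G k j)"
        unfolding G_def by (rule int_lin) (use bint bk k in auto)
      also have "\<dots> = (\<Sum>j<N. \<Sum>l<N. G k j * Bm j l * r l (v i))"
        unfolding a_def by (simp add: sum_distrib_left sum_distrib_right mult_ac)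
      also have "\<dots> = (\<Sum>l<N. (\<Sum>j<N. G k j * Bm j l) * r l (v i))"
        by (subst sum.swap) (simp add: sum_distrib_right)
      also have "\<dots> = (\<Sum>l<N. (if k = l then r l (v i) else 0))"
        using Bm k by (intro sum.cong) auto
      also have "\<dots> = r k (v i)" using k by (simp add: sum.delta)
      finally show ?thesis unfolding r_def by simp
    qed
    have orth: "\<forall>f\<in>span_fun N b. (LINT y|\<mu>. v' i y * f y) = 0" if i: "i < M" for i
    proof
      fix f assume f: "f \<in> span_fun N b"
      then obtain c where fc: "f = (\<lambda>y. \<Sum>k<N. c k * b k y)" unfolding span_fun_def by blast
      have "(LINT y|\<mu>. v' i y * f y) = (LINT y|\<mu>. (\<Sum>k<N. c k * (v' i y * b k y)))"
        unfolding fc by (simp add: sum_distrib_left mult_ac)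
      also have "\<dots> = (\<Sum>k<N. (LINT y|\<mu>. c k * (v' i y * b k y)))"
        by (rule Bochner_Integration.integral_sum) (use mult_int v'int[OF i] bk in auto)
      also have "\<dots> = 0" using orth_b[OF i] by simp
      finally show "(LINT y|\<mu>. v' i y * f y) = 0" .
    qed
    have same: "(\<Sum>i<M. w i x * v' i y) = (\<Sum>i<M. w i x * v i y)" if x: "x \<in> \<Omega>" for x y
    proof -
      have rz: "(\<Sum>i<M. w i x * r k (v i)) = 0" if k: "k < N" for k
      proof -
        have "(\<Sum>i<M. w i x * r k (v i)) = (LINT y|\<mu>. (\<Sum>i<M. w i x * v i y) * b k y)"
          unfolding r_def by (rule int_lin[symmetric]) (use h1 bk k in auto)
        also have "\<dots> = 0" using h2 bspan[OF k] x by blast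
        finally show ?thesis .
      qed
      have "(\<Sum>i<M. w i x * a i j) = 0" if j: "j < N" for j
      proof -
        have "(\<Sum>i<M. w i x * a i j) = (\<Sum>l<N. Bm j l * (\<Sum>i<M. w i x * r l (v i)))"
          unfolding a_def by (simp add: sum_distrib_left mult_ac sum.swap[of _ "{..<M}"])
        also have "\<dots> = 0" using rz by simp
        finally show ?thesis .
      qed
      hence z0: "(\<Sum>j<N. (\<Sum>i<M. w i x * a i j) * b j y) = 0" by simp
      have "(\<Sum>i<M. w i x * (\<Sum>j<N. a i j * b j y)) = (\<Sum>j<N. (\<Sum>i<M. w i x * a i j) * b j y)"
        unfolding sum_distrib_left sum_distrib_right by (subst sum.swap) (simp add: mult_ac)
      hence "(\<Sum>i<M. w i x * (\<Sum>j<N. a i j * b j y)) = 0" using z0 by simp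
      thus ?thesis unfolding v'_def by (simp add: right_diff_distrib sum_subtractf)
    qed
    have "err_inf1 \<Omega> \<mu> M K w v' = err_inf1 \<Omega> \<mu> M K w v"
      unfolding err_inf1_def by (rule SUP_cong[OF refl]) (simp add: same)
    moreover have "\<forall>i<M. continuous_on \<Omega> (w i) \<and> integrable \<mu> (v' i) \<and>
         (\<forall>f\<in>span_fun N b. (LINT y|\<mu>. v' i y * f y) = 0)"
      using h1 v'int orth by blast
    ultimately show "z \<in> Sp" unfolding Sp_def z mem_Collect_eq
      by (intro exI[of _ w] exI[of _ v'] conjI) auto
  qed
  ultimately have "Sc = Sp" by blast
  thus ?thesis unfolding sigma_c_def sigma_perp_def Sc_def Sp_def by simp
qed
end
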